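(* Let $(A,u_A)$ be an abstract state space and let $(B,u_B)$ be any fixed abstract state space whose ordered linear space $B$ is order-isomorphic to $A^*$. The following are equivalent: (a) $A$ is homogeneous; (b) every normalized state $\alpha$ in the interior of $A_+$ is the $A$-marginal of an isomorphism state in $B\otimes_{\max}A$, i.e., there is a state $\omega\in B\otimes_{\max}A$ such that $\hat\omega:B^*\to A$ is an order-isomorphism and $\hat\omega(u_B)=\alpha$.
   Context: An abstract state space is a pair $(A,u_A)$ where $A$ is a finite-dimensional real vector space with a closed, pointed, generating convex cone $A_+$, and $u_A$ is an interior point of the dual cone $A^*_+$; a normalized state is $\alpha\in A_+$ with $u_A(\alpha)=1$. An order-isomorphism is a linear bijection $\phi$ with $\phi(x)\ge0$ iff $x\ge0$. $A$ is homogeneous if the group of order-automorphisms of $A$ acts transitively on the interior of $A_+$. $B\otimes_{\max}A$ is the space of bilinear forms on $B^*\times A^*$ nonnegative on $B^*_+\times A^*_+$; a state is such a form with $\omega(u_B,u_A)=1$; $\hat\omega:B^*\to A$ is defined by $\hat\omega(b)(a)=\omega(b,a)$, and the $A$-marginal of $\omega$ is $\hat\omega(u_B)$. An isomorphism state is a state $\omega$ for which $\hat\omega$ is an order-isomorphism. *)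

theory Defs
  imports "HOL-Analysis.Analysis"
begin

text \<open>Convention: a finite-dimensional real vector space is a type of class euclidean_space.
  Its dual space is identified with the space itself via the inner product: the
  functional represented by y is (\<lambda>x. inner y x).\<close>

definition dual_cone :: "'a::euclidean_space set \<Rightarrow> 'a set" where
  "dual_cone C = {y. \<forall>x\<in>C. 0 \<le> inner y x}"

definition proper_cone :: "'a::euclidean_space set \<Rightarrow> bool" where
  "proper_cone C \<longleftrightarrow> closed C \<and> convex C \<and> cone C \<and> C \<inter> uminus ` C = {0}
     \<and> span C = UNIV"

text \<open>Abstract state space (A, u_A): A_+ = C, u_A = (\<lambda>x. inner u x).\<close>
definition abstract_state_space :: "'a::euclidean_space set \<Rightarrow> 'a \<Rightarrow> bool" where
  "abstract_state_space C u \<longleftrightarrow> proper_cone C \<and> u \<in> interior (dual_cone C)"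

definition normalized_state :: "'a::euclidean_space set \<Rightarrow> 'a \<Rightarrow> 'a \<Rightarrow> bool" where
  "normalized_state C u \<alpha> \<longleftrightarrow> \<alpha> \<in> C \<and> inner u \<alpha> = 1"

definition order_iso :: "('a::euclidean_space \<Rightarrow> 'b::euclidean_space) \<Rightarrow> 'a set \<Rightarrow> 'b set \<Rightarrow> bool" where
  "order_iso \<phi> C D \<longleftrightarrow> linear \<phi> \<and> bij \<phi> \<and> (\<forall>x. \<phi> x \<in> D \<longleftrightarrow> x \<in> C)"

definition homogeneous :: "'a::euclidean_space set \<Rightarrow> bool" where
  "homogeneous C \<longleftrightarrow>
     (\<forall>x\<in>interior C. \<forall>y\<in>interior C. \<exists>\<phi>. order_iso \<phi> C C \<and> \<phi> x = y)"

text \<open>Elements of B \<otimes>_max A: bilinear forms on B^* \<times> A^* (B^* = 'b, A^* = 'a via inner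
  product), nonnegative on B^*_+ \<times> A^*_+.\<close>
definition max_tensor :: "'b::euclidean_space set \<Rightarrow> 'a::euclidean_space set
    \<Rightarrow> ('b \<Rightarrow> 'a \<Rightarrow> real) set" where
  "max_tensor D C = {\<omega>. bilinear \<omega> \<and>
     (\<forall>b\<in>dual_cone D. \<forall>a\<in>dual_cone C. 0 \<le> \<omega> b a)}"

definition tensor_state :: "'b::euclidean_space set \<Rightarrow> 'b \<Rightarrow> 'a::euclidean_space set \<Rightarrow> 'a
    \<Rightarrow> ('b \<Rightarrow> 'a \<Rightarrow> real) \<Rightarrow> bool" where
  "tensor_state D uB C uA \<omega> \<longleftrightarrow> \<omega> \<in> max_tensor D C \<and> \<omega> uB uA = 1"

text \<open>\<omega>-hat : B^* \<rightarrow> A, the unique vector with inner (omega_hat \<omega> b) a = \<omega> b a.\<close>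
definition omega_hat :: "('b \<Rightarrow> 'a::euclidean_space \<Rightarrow> real) \<Rightarrow> 'b \<Rightarrow> 'a" where
  "omega_hat \<omega> b = (\<Sum>i\<in>Basis. \<omega> b i *\<^sub>R i)"

end

theory Submission
  imports Defs
begin

lemma linear_inv_bij:
  fixes f :: "'a::euclidean_space \<Rightarrow> 'b::euclidean_space"
  assumes "linear f" "bij f" shows "linear (inv f)"
proof (rule linearI)
  have inj: "inj f" and sur: "\<And>y. f (inv f y) = y" using assms(2)
    by (auto simp: bij_def surj_f_inv_f)
  fix x y c
  show "inv f (x + y) = inv f x + inv f y"
    by (rule injD[OF inj]) (simp add: sur linear_add[OF assms(1)])
  show "inv f (c *\<^sub>R x) = c *\<^sub>R inv f x"
    by (rule injD[OF inj]) (simp add: sur linear_scale[OF assms(1)])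
qed

lemma bipolar:
  fixes C :: "'a::euclidean_space set"
  assumes "closed C" "convex C" "cone C" "C \<noteq> {}"
  shows "z \<in> C \<longleftrightarrow> (\<forall>a\<in>dual_cone C. 0 \<le> inner a z)"
proof
  assume "z \<in> C" then show "\<forall>a\<in>dual_cone C. 0 \<le> inner a z"
    by (auto simp: dual_cone_def inner_commute)
next
  assume H: "\<forall>a\<in>dual_cone C. 0 \<le> inner a z"
  show "z \<in> C"
  proof (rule ccontr)
    assume "z \<notin> C"
    then obtain a b where ab: "inner a z < b" "\<forall>x\<in>C. inner a x > b"
      using separating_hyperplane_closed_point[OF assms(2,1)] by blast
    obtain x0 where "x0 \<in> C" using assms(4) by blast
    then have "0 \<in> C" using assms(3) unfolding cone_def by (metis order_refl scaleR_zero_left)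
    then have b: "b < 0" using ab by force
    have "a \<in> dual_cone C"
      unfolding dual_cone_def
    proof (clarify, rule ccontr)
      fix x assume x: "x \<in> C" "\<not> 0 \<le> inner a x"
      define c where "c = b / inner a x"
      have c: "c \<ge> 0" using b x by (simp add: c_def divide_nonpos_neg)
      have "c *\<^sub>R x \<in> C" using assms(3) x c unfolding cone_def by blast
      moreover have "inner a (c *\<^sub>R x) = b" using x by (simp add: c_def)
      ultimately show False using ab by force
    qed
    with H ab b show False by force
  qed
qed

lemma interior_nonzero:
  fixes C :: "'a::euclidean_space set"
  assumes "C \<inter> uminus ` C = {0}" "x \<in> interior C"
  shows "x \<noteq> 0"
proof
  assume "x = 0"
  then obtain e where e: "e > 0" "ball 0 e \<subseteq> C" using assms(2)
    by (meson mem_interior)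
  obtain i :: 'a where i: "i \<in> Basis" using nonempty_Basis by blast
  define v where "v = (e/2) *\<^sub>R i"
  have nv: "norm v < e" using e i by (simp add: v_def)
  have "v \<in> C" "-v \<in> C" using e nv by (auto simp: subset_iff dist_norm)
  then have "v \<in> C \<inter> uminus ` C" by force
  moreover have "v \<noteq> 0" using e i by (auto simp: v_def)
  ultimately show False using assms(1) by blast
qed

lemma interior_dual_pos:
  fixes C :: "'a::euclidean_space set"
  assumes "u \<in> interior (dual_cone C)" "x \<in> C" "x \<noteq> 0"
  shows "inner u x > 0"
proof -
  obtain e where e: "e > 0" "ball u e \<subseteq> dual_cone C" using assms(1)
    by (meson mem_interior)
  define w where "w = u - (e/2 / norm x) *\<^sub>R x"
  have "dist u w < e" using e assms(3) by (simp add: w_def dist_norm)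
  then have "w \<in> dual_cone C" using e by auto
  then have "0 \<le> inner w x" using assms(2) by (auto simp: dual_cone_def)
  also have "inner w x = inner u x - e/2 * norm x"
    using assms(3) by (simp add: w_def inner_diff_left power2_norm_eq_inner[symmetric] power2_eq_square)
  finally have "e/2 * norm x \<le> inner u x" by simp
  moreover have "0 < e/2 * norm x" using e assms(3) by simp
  ultimately show ?thesis by linarith
qed

lemma cone_scale_iff:
  assumes "cone C" "c > 0" shows "c *\<^sub>R z \<in> C \<longleftrightarrow> z \<in> C"
proof
  assume "c *\<^sub>R z \<in> C"
  moreover have "1/c \<ge> 0" using assms by simp
  ultimately have "(1/c) *\<^sub>R (c *\<^sub>R z) \<in> C" using assms(1) unfolding cone_def by blast
  then show "z \<in> C" using assms by simp
next
  assume "z \<in> C" then show "c *\<^sub>R z \<in> C" using assms by (auto simp: cone_def)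
qed

lemma interior_cone_scale:
  fixes C :: "'a::euclidean_space set"
  assumes "cone C" "c > 0" "x \<in> interior C" shows "c *\<^sub>R x \<in> interior C"
proof -
  obtain U where U: "open U" "x \<in> U" "U \<subseteq> C" using assms(3) by (meson interiorE)
  have "open ((\<lambda>x. c *\<^sub>R x) ` U)" using U assms by auto
  moreover have "(\<lambda>x. c *\<^sub>R x) ` U \<subseteq> C" using U assms unfolding cone_def by auto
  ultimately show ?thesis using U by (meson imageI interiorI)
qed

lemma omega_hat_inner:
  fixes v :: "'b \<Rightarrow> 'a::euclidean_space"
  shows "omega_hat (\<lambda>b a. inner (v b) a) = v"
proof
  fix b
  have "(\<Sum>i\<in>Basis. inner (v b) i *\<^sub>R i) = v b" using euclidean_representation[of "v b"]
    by (simp add: inner_commute)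
  then show "omega_hat (\<lambda>b a. inner (v b) a) b = v b" by (simp add: omega_hat_def)
qed

theorem theorem4p1:
  fixes C :: "'a::euclidean_space set" and uA :: 'a
    and D :: "'b::euclidean_space set" and uB :: 'b
  assumes "abstract_state_space C uA"
    and "abstract_state_space D uB"
    and "\<exists>\<phi>::'b \<Rightarrow> 'a. order_iso \<phi> D (dual_cone C)"
  shows "homogeneous C \<longleftrightarrow>
    (\<forall>\<alpha>. normalized_state C uA \<alpha> \<and> \<alpha> \<in> interior C \<longrightarrow>
       (\<exists>\<omega>. tensor_state D uB C uA \<omega> \<and> order_iso (omega_hat \<omega>) (dual_cone D) C
             \<and> omega_hat \<omega> uB = \<alpha>))"
proof -
  have C: "closed C" "convex C" "cone C" "C \<inter> uminus ` C = {0}" "uA \<in> interior (dual_cone C)"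
    using assms(1) by (auto simp: abstract_state_space_def proper_cone_def)
  have CNE: "C \<noteq> {}" using C(4) by auto
  have uB: "uB \<in> interior (dual_cone D)"
    using assms(2) by (auto simp: abstract_state_space_def)
  show ?thesis
  proof
    assume hom: "homogeneous C"
    obtain \<phi> :: "'b \<Rightarrow> 'a" where phi: "order_iso \<phi> D (dual_cone C)" using assms(3) by blast
    have lphi: "linear \<phi>" and bphi: "bij \<phi>" and mphi: "\<And>x. \<phi> x \<in> dual_cone C \<longleftrightarrow> x \<in> D"
      using phi by (auto simp: order_iso_def)
    have lphii: "linear (inv \<phi>)" by (rule linear_inv_bij[OF lphi bphi])
    define P where "P = adjoint \<phi>"
    define \<theta> where "\<theta> = adjoint (inv \<phi>)"
    have lP: "linear P" unfolding P_def by (rule adjoint_linear[OF lphi])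
    have lT: "linear \<theta>" unfolding \<theta>_def by (rule adjoint_linear[OF lphii])
    have invr: "\<And>y. \<phi> (inv \<phi> y) = y" and invl: "\<And>y. inv \<phi> (\<phi> y) = y"
      using bphi by (auto simp: bij_def surj_f_inv_f)
    have PT: "P (\<theta> b) = b" for b
    proof -
      have "\<forall>y. inner y (P (\<theta> b)) = inner y b"
        using adjoint_works[OF lphi] adjoint_works[OF lphii] invl
        by (simp add: P_def \<theta>_def)
      then show ?thesis by (metis inner_commute vector_eq_ldot)
    qed
    have TP: "\<theta> (P a) = a" for a
    proof -
      have "\<forall>y. inner y (\<theta> (P a)) = inner y a"
        using adjoint_works[OF lphi] adjoint_works[OF lphii] invr
        by (simp add: P_def \<theta>_def)
      then show ?thesis by (metis inner_commute vector_eq_ldot)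
    qed
    have bT: "bij \<theta>" by (metis PT TP bij_betw_byWitness subset_UNIV surjI top.extremum_unique)
    have Pmem: "P a \<in> dual_cone D \<longleftrightarrow> a \<in> C" for a
    proof -
      have "P a \<in> dual_cone D \<longleftrightarrow> (\<forall>d\<in>D. 0 \<le> inner (P a) d)"
        by (simp add: dual_cone_def)
      also have "\<dots> \<longleftrightarrow> (\<forall>d\<in>D. 0 \<le> inner a (\<phi> d))"
        using adjoint_works[OF lphi] by (simp add: P_def inner_commute)
      also have "\<dots> \<longleftrightarrow> (\<forall>c\<in>dual_cone C. 0 \<le> inner c a)"
        by (metis inner_commute invr mphi)
      also have "\<dots> \<longleftrightarrow> a \<in> C" using bipolar[OF C(1-3) CNE] by simp
      finally show ?thesis .
    qed
    have Tmem: "\<theta> b \<in> C \<longleftrightarrow> b \<in> dual_cone D" for b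
      using Pmem[of "\<theta> b"] PT by simp
    have TuB: "\<theta> uB \<in> interior C"
    proof -
      obtain U where U: "open U" "uB \<in> U" "U \<subseteq> dual_cone D" using uB by (meson interiorE)
      have "continuous_on UNIV P" using lP by (simp add: linear_continuous_on linear_linear)
      then have "open (P -` U)" using U(1) by (simp add: open_vimage)
      moreover have "P -` U \<subseteq> C" using U Pmem by auto
      moreover have "\<theta> uB \<in> P -` U" using PT U by simp
      ultimately show ?thesis by (meson interiorI)
    qed
    show "\<forall>\<alpha>. normalized_state C uA \<alpha> \<and> \<alpha> \<in> interior C \<longrightarrow>
       (\<exists>\<omega>. tensor_state D uB C uA \<omega> \<and> order_iso (omega_hat \<omega>) (dual_cone D) C
             \<and> omega_hat \<omega> uB = \<alpha>)"
    proof (intro allI impI)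
      fix \<alpha> assume a: "normalized_state C uA \<alpha> \<and> \<alpha> \<in> interior C"
      obtain g where g: "order_iso g C C" "g (\<theta> uB) = \<alpha>"
        using hom TuB a unfolding homogeneous_def by blast
      have lg: "linear g" and bg: "bij g" and mg: "\<And>x. g x \<in> C \<longleftrightarrow> x \<in> C"
        using g by (auto simp: order_iso_def)
      define v where "v = g \<circ> \<theta>"
      have lv: "linear v" unfolding v_def using lg lT by (simp add: linear_compose)
      define \<omega> where "\<omega> = (\<lambda>b a. inner (v b) a)"
      have oh: "omega_hat \<omega> = v" unfolding \<omega>_def by (rule omega_hat_inner)
      have vmem: "v b \<in> C \<longleftrightarrow> b \<in> dual_cone D" for b
        by (simp add: v_def mg Tmem)
      have bil: "bilinear \<omega>"
        unfolding bilinear_def \<omega>_def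
      proof (intro conjI allI)
        fix x show "linear (\<lambda>y. inner (v x) y)" by (simp add: linear_iff inner_add_right)
      next
        fix y show "linear (\<lambda>x. inner (v x) y)"
          using lv by (simp add: linear_iff inner_add_left)
      qed
      have ts: "tensor_state D uB C uA \<omega>"
        unfolding tensor_state_def max_tensor_def
      proof (intro conjI CollectI ballI bil)
        fix b a assume "b \<in> dual_cone D" "a \<in> dual_cone C"
        then show "0 \<le> \<omega> b a" using vmem[of b]
          by (auto simp: \<omega>_def dual_cone_def inner_commute)
      next
        show "\<omega> uB uA = 1" using a g
          by (simp add: \<omega>_def v_def normalized_state_def inner_commute)
      qed
      have "order_iso v (dual_cone D) C"
        unfolding order_iso_def using lv bg bT vmem by (simp add: v_def bij_comp)
      then show "\<exists>\<omega>. tensor_state D uB C uA \<omega> \<and> order_iso (omega_hat \<omega>) (dual_cone D) C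
             \<and> omega_hat \<omega> uB = \<alpha>"
        using ts oh g by (intro exI[of _ \<omega>]) (simp add: v_def)
    qed
  next
    assume B: "\<forall>\<alpha>. normalized_state C uA \<alpha> \<and> \<alpha> \<in> interior C \<longrightarrow>
       (\<exists>\<omega>. tensor_state D uB C uA \<omega> \<and> order_iso (omega_hat \<omega>) (dual_cone D) C
             \<and> omega_hat \<omega> uB = \<alpha>)"
    have get: "\<exists>f. linear f \<and> bij f \<and> (\<forall>z. f z \<in> C \<longleftrightarrow> z \<in> dual_cone D) \<and> 
                   inner uA x *\<^sub>R f uB = x \<and> inner uA x > 0"
      if x: "x \<in> interior C" for x
    proof -
      have xC: "x \<in> C" using x interior_subset by blast
      have s: "inner uA x > 0"
        using interior_dual_pos[OF C(5) xC interior_nonzero[OF C(4) x]] .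
      define x' where "x' = (1 / inner uA x) *\<^sub>R x"
      have "normalized_state C uA x' \<and> x' \<in> interior C"
        using s xC x C(3) interior_cone_scale[OF C(3) _ x, of "1 / inner uA x"]
        by (auto simp: x'_def normalized_state_def cone_scale_iff)
      then obtain \<omega> where "order_iso (omega_hat \<omega>) (dual_cone D) C" "omega_hat \<omega> uB = x'"
        using B by blast
      then show ?thesis using s
        by (intro exI[of _ "omega_hat \<omega>"]) (auto simp: order_iso_def x'_def)
    qed
    show "homogeneous C"
      unfolding homogeneous_def
    proof (intro ballI)
      fix x y assume x: "x \<in> interior C" and y: "y \<in> interior C"
      obtain f1 where f1: "linear f1" "bij f1" "\<And>z. f1 z \<in> C \<longleftrightarrow> z \<in> dual_cone D"
        "inner uA x *\<^sub>R f1 uB = x" "inner uA x > 0"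
        using get[OF x] by blast
      obtain f2 where f2: "linear f2" "bij f2" "\<And>z. f2 z \<in> C \<longleftrightarrow> z \<in> dual_cone D"
        "inner uA y *\<^sub>R f2 uB = y" "inner uA y > 0"
        using get[OF y] by blast
      define c where "c = inner uA y / inner uA x"
      have c: "c > 0" using f1 f2 by (simp add: c_def)
      define h where "h = (\<lambda>z. c *\<^sub>R f2 (inv f1 z))"
      have r1: "\<And>z. f1 (inv f1 z) = z" and l1: "\<And>z. inv f1 (f1 z) = z"
        using f1(2) by (auto simp: bij_def surj_f_inv_f)
      have li: "linear (inv f1)" by (rule linear_inv_bij[OF f1(1,2)])
      have lh: "linear h" unfolding h_def
        using li f2(1) by (simp add: linear_iff scaleR_add_right)
      have bi: "bij (inv f1)" using f1(2) by (simp add: bij_imp_bij_inv)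
      have bs: "bij (\<lambda>z. c *\<^sub>R (z::'a))"
        using c by (intro bij_betw_byWitness[where f'="\<lambda>z. (1/c) *\<^sub>R z"]) auto
      have bh: "bij h"
      proof -
        have "h = (\<lambda>z. c *\<^sub>R z) \<circ> f2 \<circ> inv f1" by (auto simp: h_def)
        then show ?thesis using bs f2(2) bi by (simp add: bij_comp)
      qed
      have mh: "h z \<in> C \<longleftrightarrow> z \<in> C" for z
        using cone_scale_iff[OF C(3) c] f2(3) f1(3)[of "inv f1 z"] r1
        by (simp add: h_def)
      have "inv f1 x = inner uA x *\<^sub>R uB"
        using f1(4) l1 linear_scale[OF f1(1)] by metis
      then have "h x = y" using f1(5) f2(4) linear_scale[OF f2(1)]
        by (simp add: h_def c_def)
      then show "\<exists>\<phi>. order_iso \<phi> C C \<and> \<phi> x = y"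
        using lh bh mh by (auto simp: order_iso_def)
    qed
  qed
qed

end
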